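(* Let $(F,\delta)$ be a differential field of characteristic zero and $(F(t),\delta)$ a monomial extension of $(F,\delta)$. If $f\in F(t)$ is stable in $(F(t),\delta)$, then $\nu_p(f)\ge0$ for every irreducible normal polynomial $p\in F[t]$; i.e., every irreducible factor of the denominator of $f$ is a special polynomial.
   Context: A differential field $(K,\delta)$ is a field with an additive map $\delta$ satisfying the Leibniz rule. $(F(t),\delta)$ is a monomial extension of $(F,\delta)$ if $t$ is transcendental over $F$, the derivation on $F(t)$ extends that of $F$, and $\delta(t)\in F[t]$. A polynomial $p\in F[t]$ is normal if $\gcd(p,\delta(p))=1$ and special if $\gcd(p,\delta(p))=p$. For an irreducible $p\in F[t]$ and nonzero $f\in F(t)$, writing $f=p^m a/b$ with $m\in\mathbb{Z}$, $a,b\in F[t]$, $\gcd(a,b)=1$, $p\nmid ab$, the order is $\nu_p(f)=m$; $\nu_p(0)=+\infty$. An element $f$ is stable in $(F(t),\delta)$ if there is a sequence $(a_i)_{i\ge0}$ in $F(t)$ with $a_0=f$ and $\delta(a_{i+1})=a_i$ for all $i\in\mathbb{N}$. *)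

theory Defs
  imports "HOL-Computational_Algebra.Computational_Algebra"
begin

text \<open>The field F(t) of rational functions over F is modelled as the fraction
field of the polynomial ring F[t]; polynomials are embedded via Fract p 1.\<close>

definition derivation :: "('b::comm_ring_1 \<Rightarrow> 'b) \<Rightarrow> bool" where
  "derivation D \<longleftrightarrow> (\<forall>x y. D (x + y) = D x + D y) \<and> (\<forall>x y. D (x * y) = D x * y + x * D y)"

definition monomial_extension ::
  "('a::field \<Rightarrow> 'a) \<Rightarrow> ('a poly fract \<Rightarrow> 'a poly fract) \<Rightarrow> bool" where
  "monomial_extension dF D \<longleftrightarrow>
     derivation dF \<and> derivation D \<and>
     (\<forall>c. D (Fract [:c:] 1) = Fract [:dF c:] 1) \<and>
     (\<exists>q. D (Fract [:0, 1:] 1) = Fract q 1)"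

definition normal_poly :: "('a::field poly fract \<Rightarrow> 'a poly fract) \<Rightarrow> 'a poly \<Rightarrow> bool" where
  "normal_poly D p \<longleftrightarrow> (\<exists>q. D (Fract p 1) = Fract q 1 \<and> coprime p q)"

text \<open>Order of a nonzero f at the irreducible p: the unique m with
  f = p^m a / b, coprime a b, p dividing neither a nor b. For f = 0 the order is
  +infinity; we only use it for nonzero f.\<close>
definition nu :: "'a::field poly \<Rightarrow> 'a poly fract \<Rightarrow> int" where
  "nu p f = (THE m. \<exists>a b. b \<noteq> 0 \<and> coprime a b \<and> \<not> p dvd a \<and> \<not> p dvd b \<and>
                        f = Fract p 1 powi m * Fract a b)"

definition stable_elem :: "('a::field poly fract \<Rightarrow> 'a poly fract) \<Rightarrow> 'a poly fract \<Rightarrow> bool" where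
  "stable_elem D f \<longleftrightarrow> (\<exists>a :: nat \<Rightarrow> 'a poly fract. a 0 = f \<and> (\<forall>i. D (a (Suc i)) = a i))"

end

theory Submission
  imports Defs
begin


lemma der_zero: assumes "derivation D" shows "D 0 = 0"
proof -
  have "D (0 + 0) = D 0 + D 0" using assms unfolding derivation_def by blast
  thus ?thesis by simp
qed

lemma der_one: assumes "derivation (D :: 'b::comm_ring_1 \<Rightarrow> 'b)" shows "D 1 = 0"
proof -
  have "D (1 * 1) = D 1 * 1 + 1 * D 1" using assms unfolding derivation_def by blast
  thus ?thesis by simp
qed

lemma der_add: "derivation D \<Longrightarrow> D (x + y) = D x + D y" unfolding derivation_def by blast
lemma der_mult: "derivation D \<Longrightarrow> D (x * y) = D x * y + x * D y" unfolding derivation_def by blast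

lemma Fract1_add: "Fract (a::'a::idom) 1 + Fract b 1 = Fract (a + b) 1" by simp
lemma Fract1_mult: "Fract (a::'a::idom) 1 * Fract b 1 = Fract (a * b) 1" by simp
lemma Fract1_inj: "Fract (a::'a::idom) 1 = Fract b 1 \<longleftrightarrow> a = b" by (simp add: eq_fract)

lemma D_poly:
  fixes D :: "'a::field poly fract \<Rightarrow> 'a poly fract"
  assumes "monomial_extension dF D"
  shows "\<exists>r. D (Fract q 1) = Fract r 1"
proof (induct q rule: pCons_induct)
  case 0
  have "D 0 = 0" using assms der_zero unfolding monomial_extension_def by blast
  then show ?case by (metis Zero_fract_def)
next
  case (pCons a q)
  then obtain r where r: "D (Fract q 1) = Fract r 1" by blast
  from assms obtain s where s: "D (Fract [:0, 1:] 1) = Fract s 1"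
    unfolding monomial_extension_def by blast
  have dc: "D (Fract [:a:] 1) = Fract [:dF a:] 1" using assms unfolding monomial_extension_def by blast
  have dd: "derivation D" using assms unfolding monomial_extension_def by blast
  have "pCons a q = [:a:] + [:0,1:] * q" by (simp add: pCons_one) 
  hence "Fract (pCons a q) 1 = Fract [:a:] 1 + Fract [:0,1:] 1 * Fract q 1" by simp
  hence "D (Fract (pCons a q) 1) = D (Fract [:a:] 1) + D (Fract [:0,1:] 1 * Fract q 1)"
    using der_add[OF dd] by metis
  also have "\<dots> = D (Fract [:a:] 1) + (D (Fract [:0,1:] 1) * Fract q 1 + Fract [:0,1:] 1 * D (Fract q 1))"
    using der_mult[OF dd] by metis
  also have "\<dots> = Fract ([:dF a:] + (s * q + [:0,1:] * r)) 1"
    unfolding dc s r by (simp only: Fract1_add Fract1_mult)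
  finally show ?case by blast
qed

definition PD :: "('a::field poly fract \<Rightarrow> 'a poly fract) \<Rightarrow> 'a poly \<Rightarrow> 'a poly" where
  "PD D q = (SOME r. D (Fract q 1) = Fract r 1)"

lemma PD: assumes "monomial_extension dF D" shows "D (Fract q 1) = Fract (PD D q) 1"
  unfolding PD_def by (rule someI_ex[OF D_poly[OF assms]])

lemma PD_add: assumes "monomial_extension dF D" shows "PD D (a + b) = PD D a + PD D b"
proof -
  have dd: "derivation D" using assms unfolding monomial_extension_def by blast
  have "Fract (PD D (a + b)) 1 = D (Fract a 1 + Fract b 1)" using PD[OF assms] by simp
  also have "\<dots> = D (Fract a 1) + D (Fract b 1)" using der_add[OF dd] by blast
  also have "\<dots> = Fract (PD D a + PD D b) 1" using PD[OF assms] by simp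
  finally show ?thesis by (simp add: Fract1_inj)
qed

lemma PD_mult: assumes "monomial_extension dF D" shows "PD D (a * b) = PD D a * b + a * PD D b"
proof -
  have dd: "derivation D" using assms unfolding monomial_extension_def by blast
  have "Fract (PD D (a * b)) 1 = D (Fract a 1 * Fract b 1)" using PD[OF assms] by simp
  also have "\<dots> = D (Fract a 1) * Fract b 1 + Fract a 1 * D (Fract b 1)" using der_mult[OF dd] by blast
  also have "\<dots> = Fract (PD D a * b + a * PD D b) 1" using PD[OF assms] by simp
  finally show ?thesis by (simp add: Fract1_inj)
qed

lemma PD_pow: assumes "monomial_extension dF D"
  shows "PD D (p ^ Suc k) = of_nat (Suc k) * p ^ k * PD D p"
proof (induct k)
  case 0 then show ?case by simp
next
  case (Suc k)
  have "PD D (p ^ Suc (Suc k)) = PD D (p * p ^ Suc k)" by simp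
  also have "\<dots> = PD D p * p ^ Suc k + p * (of_nat (Suc k) * p ^ k * PD D p)"
    using PD_mult[OF assms] Suc by simp
  also have "\<dots> = of_nat (Suc (Suc k)) * p ^ Suc k * PD D p" by (simp add: algebra_simps)
  finally show ?case .
qed

lemma D_Fract: assumes "monomial_extension dF D" and b: "b \<noteq> 0"
  shows "D (Fract a b) = Fract (PD D a * b - a * PD D b) (b^2)"
proof -
  have dd: "derivation D" using assms unfolding monomial_extension_def by blast
  have "Fract a 1 = Fract a b * Fract b 1" using b by (simp add: eq_fract)
  hence "Fract (PD D a) 1 = D (Fract a b) * Fract b 1 + Fract a b * Fract (PD D b) 1"
    using der_mult[OF dd] PD[OF assms(1)] by metis
  hence e: "D (Fract a b) * Fract b 1 = Fract (PD D a) 1 - Fract a b * Fract (PD D b) 1"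
    by (simp add: algebra_simps)
  have nz: "Fract b 1 \<noteq> 0" using b by (simp add: Zero_fract_def eq_fract)
  have "Fract (PD D a * b - a * PD D b) (b^2) * Fract b 1 = Fract (PD D a) 1 - Fract a b * Fract (PD D b) 1"
    using b by (simp add: eq_fract power2_eq_square algebra_simps)
  with e nz show ?thesis by (metis mult_right_cancel)
qed



lemma irr_bezout:
  fixes p a :: "'a::field poly"
  assumes irr: "irreducible p" and pa: "\<not> p dvd a"
  shows "\<exists>u v. u * p + v * a = 1"
proof -
  define P where "P n \<longleftrightarrow> (\<exists>u v. u * p + v * a \<noteq> 0 \<and> degree (u * p + v * a) = n)" for n
  have a0: "a \<noteq> 0" using pa by auto
  have "\<exists>n. P n" unfolding P_def by (rule exI[of _ "degree a"], rule exI[of _ 0], rule exI[of _ 1]) (simp add: a0)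
  define n where "n = (LEAST n. P n)"
  have Pn: "P n" unfolding n_def using \<open>\<exists>n. P n\<close> by (rule LeastI_ex)
  have mn: "\<not> P m" if "m < n" for m using that unfolding n_def by (rule not_less_Least)
  from Pn obtain u v where g0: "u * p + v * a \<noteq> 0" and gd: "degree (u * p + v * a) = n" unfolding P_def by blast
  define g where "g = u * p + v * a"
  have dv: "g dvd x" if x: "x = s * p + t * a" for x s t
  proof (rule ccontr)
    assume nd: "\<not> g dvd x"
    hence r0: "x mod g \<noteq> 0" by (simp add: dvd_eq_mod_eq_0)
    have "degree (x mod g) < n" using degree_mod_less'[OF _ r0] g0 gd g_def by simp
    moreover have eq: "x mod g = (s - x div g * u) * p + (t - x div g * v) * a"
      by (simp add: minus_div_mult_eq_mod[symmetric] x g_def algebra_simps)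
    have "P (degree (x mod g))" unfolding P_def
      apply (rule exI[of _ "s - x div g * u"], rule exI[of _ "t - x div g * v"]) using r0 eq by simp
    thus False using mn \<open>degree (x mod g) < n\<close> by blast
  qed
  have gp: "g dvd p" using dv[of p 1 0] by simp
  have ga: "g dvd a" using dv[of a 0 1] by simp
  from gp obtain h where h: "p = g * h" by (elim dvdE)
  have "is_unit g \<or> is_unit h" using irr h by (simp add: irreducible_def)
  moreover have "\<not> is_unit h"
  proof
    assume "is_unit h"
    then obtain k where k: "1 = h * k" by (elim dvdE)
    have "g = p * k" using h k by (metis mult.assoc mult_1_right)
    hence "p dvd g" by simp
    hence "p dvd a" using ga by (rule dvd_trans)
    thus False using pa by simp
  qed
  ultimately have "is_unit g" by blast
  then obtain w where w: "1 = g * w" by (elim dvdE)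
  have "(w * u) * p + (w * v) * a = 1" using w unfolding g_def by (simp add: algebra_simps)
  thus ?thesis by blast
qed

lemma irr_prime:
  fixes p :: "'a::field poly"
  assumes irr: "irreducible p" shows "prime_elem p"
proof (rule prime_elemI)
  show "p \<noteq> 0" using irr by auto
  show "\<not> is_unit p" using irr by (simp add: irreducible_def)
  fix x y assume d: "p dvd x * y"
  show "p dvd x \<or> p dvd y"
  proof (cases "p dvd x")
    case False
    then obtain u v where uv: "u * p + v * x = 1" using irr_bezout[OF irr] by blast
    have "y = y * (u * p + v * x)" using uv by simp
    also have "\<dots> = (y * u) * p + v * (x * y)" by (simp add: algebra_simps)
    finally have eq: "y = (y * u) * p + v * (x * y)" .
    have dd: "p dvd (y * u) * p + v * (x * y)" using d by simp
    have "p dvd y" by (subst eq) (fact dd)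
    thus ?thesis by simp
  qed simp
qed



lemma Fract_pow: "Fract (p::'a::idom) 1 ^ k = Fract (p ^ k) 1"
  by (induct k) (simp_all add: One_fract_def)

lemma powi_Fract:
  fixes p :: "'a::idom"
  shows "Fract p 1 powi n * Fract a b = (if 0 \<le> n then Fract (p ^ nat n * a) b else Fract a (p ^ nat (-n) * b))"
proof (cases "0 \<le> n")
  case True
  then obtain k where "n = int k" by (metis nonneg_int_cases)
  then show ?thesis by (simp add: Fract_pow)
next
  case False
  then obtain k where k: "n = - int k" by (metis nle_le nonpos_int_cases)
  have "Fract p 1 powi n = inverse (Fract p 1 ^ k)" by (simp add: k power_int_minus)
  then show ?thesis using False k by (simp add: Fract_pow)
qed

definition vl :: "'a::field poly \<Rightarrow> 'a poly fract \<Rightarrow> int \<Rightarrow> bool" where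
  "vl p h n \<longleftrightarrow> (\<exists>a b. b \<noteq> 0 \<and> \<not> p dvd a \<and> \<not> p dvd b \<and> h = Fract p 1 powi n * Fract a b)"

definition intg :: "'a::field poly \<Rightarrow> 'a poly fract \<Rightarrow> bool" where
  "intg p h \<longleftrightarrow> (\<exists>a b. b \<noteq> 0 \<and> \<not> p dvd b \<and> h = Fract a b)"

lemma key_neq:
  fixes p :: "'a::field poly"
  assumes pr: "prime_elem p" and k: "k > 0" and b: "b \<noteq> 0" and d: "d \<noteq> 0"
    and pa: "\<not> p dvd a" and pd: "\<not> p dvd d"
  shows "Fract a b \<noteq> Fract (p ^ k * c) d"
proof
  assume "Fract a b = Fract (p ^ k * c) d"
  hence "a * d = p ^ k * c * b" using b d by (simp add: eq_fract)
  moreover have "p dvd p ^ k" using k by (simp add: dvd_power)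
  ultimately have "p dvd a * d" by (metis dvd_mult2)
  thus False using pr pa pd by (simp add: prime_elem_dvd_mult_iff)
qed

lemma vl_unique:
  fixes p :: "'a::field poly"
  assumes pr: "prime_elem p" and "vl p h n" and "vl p h m"
  shows "n = m"
proof (rule ccontr)
  assume ne: "n \<noteq> m"
  have p0: "p \<noteq> 0" using pr by auto
  have P0: "Fract p 1 \<noteq> 0" using p0 by (simp add: Zero_fract_def eq_fract)
  have gen: False if "n' < m'" "b \<noteq> 0" "\<not> p dvd a" "\<not> p dvd b" "d \<noteq> 0" "\<not> p dvd c" "\<not> p dvd d"
     "Fract p 1 powi n' * Fract a b = Fract p 1 powi m' * Fract c d" for n' m' a b c d
  proof -
    have inv: "Fract p 1 powi (- n') * Fract p 1 powi n' = 1"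
      using P0 by (simp add: power_int_minus power_int_eq_0_iff)
    have eq2: "Fract p 1 powi (- n') * Fract p 1 powi m' = Fract p 1 powi (m' - n')"
      using P0 by (simp add: power_int_add[symmetric])
    have "Fract a b = Fract p 1 powi (- n') * (Fract p 1 powi n' * Fract a b)"
      by (simp add: mult.assoc[symmetric] inv)
    also have "\<dots> = Fract p 1 powi (- n') * Fract p 1 powi m' * Fract c d"
      using that(8) by (simp add: mult.assoc)
    also have "\<dots> = Fract p 1 powi (m' - n') * Fract c d" using eq2 by simp
    also have "\<dots> = Fract (p ^ nat (m' - n') * c) d" using that(1) by (simp add: powi_Fract)
    finally show False using key_neq[OF pr, of "nat (m' - n')" b d a c] that by simp
  qed
  from assms(2,3) obtain a b c d where H: "b \<noteq> 0" "\<not> p dvd a" "\<not> p dvd b" "h = Fract p 1 powi n * Fract a b"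
    "d \<noteq> 0" "\<not> p dvd c" "\<not> p dvd d" "h = Fract p 1 powi m * Fract c d" unfolding vl_def by blast
  show False
  proof (cases "n < m")
    case True then show ?thesis using gen[of n m b a d c] H by auto
  next
    case False then have "m < n" using ne by simp
    then show ?thesis using gen[of m n d c b a] H by auto
  qed
qed

lemma vl_nonneg_intg:
  fixes p :: "'a::field poly"
  assumes "vl p h n" "0 \<le> n" shows "intg p h"
  using assms unfolding vl_def intg_def by (auto simp: powi_Fract)

lemma vl_neg_not_intg:
  fixes p :: "'a::field poly"
  assumes pr: "prime_elem p" and "vl p h n" "n < 0" shows "\<not> intg p h"
proof
  assume "intg p h"
  then obtain c d where cd: "d \<noteq> 0" "\<not> p dvd d" "h = Fract c d" unfolding intg_def by blast
  from assms obtain a b where ab: "b \<noteq> 0" "\<not> p dvd a" "\<not> p dvd b" "h = Fract a (p ^ nat (-n) * b)"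
    unfolding vl_def by (auto simp: powi_Fract)
  have p0: "p \<noteq> 0" using pr by auto
  have "Fract c d = Fract a (p ^ nat (-n) * b)" using ab cd by simp
  hence "c * (p ^ nat (-n) * b) = a * d" using ab cd p0 by (simp add: eq_fract)
  moreover have "p dvd p ^ nat (-n)" using \<open>n < 0\<close> by (simp add: dvd_power)
  ultimately have "p dvd a * d" by (metis dvd_mult2 dvd_mult)
  thus False using pr ab cd by (simp add: prime_elem_dvd_mult_iff)
qed

lemma decomp:
  fixes p a :: "'a::field poly"
  assumes p0: "p \<noteq> 0" and pu: "\<not> is_unit p" and a0: "a \<noteq> 0"
  shows "\<exists>k a'. a = p ^ k * a' \<and> \<not> p dvd a'"
  using a0
proof (induct "degree a" arbitrary: a rule: less_induct)
  case less
  show ?case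
  proof (cases "p dvd a")
    case False
    then show ?thesis by (rule_tac x=0 in exI, rule_tac x=a in exI) simp
  next
    case True
    then obtain a1 where a1: "a = p * a1" by (elim dvdE)
    have a10: "a1 \<noteq> 0" using a1 less.prems by auto
    have "degree p > 0" using p0 pu is_unit_iff_degree by blast
    hence "degree a1 < degree a" using a1 a10 p0 by (simp add: degree_mult_eq)
    then obtain k a' where "a1 = p ^ k * a'" "\<not> p dvd a'" using less.hyps a10 by blast
    hence "a = p ^ Suc k * a'" "\<not> p dvd a'" using a1 by (simp_all add: mult.assoc)
    then show ?thesis by blast
  qed
qed

lemma coprime_rep:
  fixes a b :: "'a::field poly"
  assumes "b \<noteq> 0"
  shows "\<exists>a1 b1. b1 \<noteq> 0 \<and> coprime a1 b1 \<and> a1 dvd a \<and> b1 dvd b \<and> Fract a b = Fract a1 b1"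
  using assms
proof (induct "degree b" arbitrary: a b rule: less_induct)
  case less
  show ?case
  proof (cases "coprime a b")
    case True
    then show ?thesis using less.prems by (intro exI[of _ a] exI[of _ b]) simp
  next
    case False
    then obtain c where c: "c dvd a" "c dvd b" "\<not> is_unit c" by (rule not_coprimeE)
    obtain a' where a': "a = c * a'" using c by (elim dvdE)
    obtain b' where b': "b = c * b'" using c by (elim dvdE)
    have c0: "c \<noteq> 0" using b' less.prems by auto
    have b'0: "b' \<noteq> 0" using b' less.prems by auto
    have "degree c > 0" using c0 c(3) is_unit_iff_degree by blast
    hence "degree b' < degree b" using b' b'0 c0 by (simp add: degree_mult_eq)
    then obtain a1 b1 where r: "b1 \<noteq> 0" "coprime a1 b1" "a1 dvd a'" "b1 dvd b'" "Fract a' b' = Fract a1 b1"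
      using less.hyps[OF _ b'0] by blast
    have "Fract a b = Fract a' b'" using b'0 less.prems unfolding a' b' by (simp add: eq_fract)
    hence e: "Fract a b = Fract a1 b1" using r(5) by simp
    have "a1 dvd a" using r(3) a' by simp
    moreover have "b1 dvd b" using r(4) b' by simp
    ultimately show ?thesis using r(1,2) e by (intro exI[of _ a1] exI[of _ b1]) simp
  qed
qed

lemma vl_exists:
  fixes p :: "'a::field poly"
  assumes pr: "prime_elem p" and h: "h \<noteq> 0" shows "\<exists>n. vl p h n"
proof -
  obtain a b where ab2: "h = Fract a b" "b \<noteq> 0" by (cases h)
  have ab: "b \<noteq> 0" "h = Fract a b" using ab2 by simp_all
  have a0: "a \<noteq> 0" using ab h by (metis eq_fract(3) Zero_fract_def)
  have p0: "p \<noteq> 0" using pr by auto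
  have pu: "\<not> is_unit p" using pr by (simp add: prime_elem_def)
  have b0: "b \<noteq> 0" using ab by simp
  obtain k a' where a': "a = p ^ k * a'" "\<not> p dvd a'" using decomp[OF p0 pu a0] by blast
  obtain l b' where b': "b = p ^ l * b'" "\<not> p dvd b'" using decomp[OF p0 pu b0] by blast
  have b'0: "b' \<noteq> 0" using b' ab by auto
  have "h = Fract p 1 powi (int k - int l) * Fract a' b'"
  proof (cases "l \<le> k")
    case True
    have "Fract p 1 powi (int k - int l) * Fract a' b' = Fract (p ^ (k - l) * a') b'"
      using True by (simp add: powi_Fract nat_diff_distrib)
    also have "\<dots> = Fract a b"
    proof -
      have pk: "p ^ k = p ^ (k - l) * p ^ l" using True by (metis le_add_diff_inverse2 power_add)
      have "p ^ (k - l) * a' * b = a * b'"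
        apply (subst a'(1), subst b'(1))
        by (simp add: pk algebra_simps)
      thus ?thesis using ab b'0 by (simp add: eq_fract)
    qed
    finally show ?thesis using ab by simp
  next
    case False
    have "Fract p 1 powi (int k - int l) * Fract a' b' = Fract a' (p ^ (l - k) * b')"
      using False by (simp add: powi_Fract nat_diff_distrib)
    also have "\<dots> = Fract a b"
    proof -
      have pl: "p ^ l = p ^ (l - k) * p ^ k" using False by (metis nat_le_linear le_add_diff_inverse2 power_add)
      have "a' * b = a * (p ^ (l - k) * b')"
        apply (subst a'(1), subst b'(1))
        by (simp add: pl algebra_simps)
      thus ?thesis using ab b'0 p0 by (simp add: eq_fract)
    qed
    finally show ?thesis using ab by simp
  qed
  thus ?thesis unfolding vl_def using a' b' b'0 by blast
qed

lemma nu_eq: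
  fixes p :: "'a::field poly"
  assumes pr: "prime_elem p" and v: "vl p h n" shows "nu p h = n"
proof -
  from v obtain a b where ab: "b \<noteq> 0" "\<not> p dvd a" "\<not> p dvd b" "h = Fract p 1 powi n * Fract a b"
    unfolding vl_def by blast
  obtain a1 b1 where r: "b1 \<noteq> 0" "coprime a1 b1" "a1 dvd a" "b1 dvd b" "Fract a b = Fract a1 b1"
    using coprime_rep[OF ab(1)] by blast
  have b10: "b1 \<noteq> 0" by fact
  have cop: "coprime a1 b1" by fact
  have "\<not> p dvd a1" using r(3) ab(2) dvd_trans by blast
  moreover have "\<not> p dvd b1" using r(4) ab(3) dvd_trans by blast
  ultimately have P: "\<exists>a b. b \<noteq> 0 \<and> coprime a b \<and> \<not> p dvd a \<and> \<not> p dvd b \<and> h = Fract p 1 powi n * Fract a b"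
    using ab(1,4) r(1,2,5) by (intro exI[of _ a1] exI[of _ b1]) simp
  have U: "m = n" if "\<exists>a b. b \<noteq> 0 \<and> coprime a b \<and> \<not> p dvd a \<and> \<not> p dvd b \<and> h = Fract p 1 powi m * Fract a b" for m
  proof -
    from that obtain a b where "b \<noteq> 0" "\<not> p dvd a" "\<not> p dvd b" "h = Fract p 1 powi m * Fract a b" by blast
    hence "vl p h m" unfolding vl_def by (intro exI[of _ a] exI[of _ b]) simp
    thus ?thesis using vl_unique[OF pr _ v] by simp
  qed
  show ?thesis unfolding nu_def using P U by (rule the_equality)
qed



lemma intg_D:
  fixes p :: "'a::field poly"
  assumes me: "monomial_extension dF D" and pr: "prime_elem p" and i: "intg p h"
  shows "intg p (D h)"
proof -
  from i obtain a b where ab: "b \<noteq> 0" "\<not> p dvd b" "h = Fract a b" unfolding intg_def by blast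
  have "D h = Fract (PD D a * b - a * PD D b) (b^2)" using D_Fract[OF me ab(1)] ab(3) by simp
  moreover have "b^2 \<noteq> 0" using ab by simp
  moreover have "\<not> p dvd b^2" using ab(2) prime_elem_dvd_power[OF pr] by blast
  ultimately show ?thesis unfolding intg_def by blast
qed

lemma vl_D:
  fixes p :: "'a::field_char_0 poly"
  assumes me: "monomial_extension dF D" and pr: "prime_elem p" and np: "\<not> p dvd PD D p"
    and v: "vl p h n" and n: "n < 0"
  shows "vl p (D h) (n - 1)"
proof -
  from v n obtain a b where ab: "b \<noteq> 0" "\<not> p dvd a" "\<not> p dvd b" "h = Fract a (p ^ nat (-n) * b)"
    unfolding vl_def by (auto simp: powi_Fract)
  have p0: "p \<noteq> 0" using pr by auto
  define j where "j = nat (-n) - 1"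
  have nj: "nat (-n) = Suc j" using n j_def by simp
  define B where "B = p ^ Suc j * b"
  have B0: "B \<noteq> 0" using B_def ab p0 by simp
  have hB: "h = Fract a B" using ab(4) nj B_def by simp
  have PB: "PD D B = of_nat (Suc j) * p ^ j * PD D p * b + p ^ Suc j * PD D b"
    unfolding B_def using PD_mult[OF me] PD_pow[OF me] by simp
  define N where "N = PD D a * p * b - a * (of_nat (Suc j) * PD D p * b + p * PD D b)"
  have num: "PD D a * B - a * PD D B = p ^ j * N"
    unfolding PB unfolding N_def B_def by (simp add: algebra_simps)
  have den: "B^2 = p ^ j * (p ^ Suc (Suc j) * b^2)"
    unfolding B_def by (simp add: algebra_simps power2_eq_square)
  have "D h = Fract (p ^ j * N) (p ^ j * (p ^ Suc (Suc j) * b^2))"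
    using D_Fract[OF me B0] hB num den by simp
  also have "\<dots> = Fract N (p ^ Suc (Suc j) * b^2)"
    using p0 ab by (simp add: eq_fract)
  also have "\<dots> = Fract p 1 powi (n - 1) * Fract N (b^2)"
  proof -
    have "nat (-(n - 1)) = Suc (Suc j)" using nj by simp
    thus ?thesis using n by (simp add: powi_Fract)
  qed
  finally have Dh: "D h = Fract p 1 powi (n - 1) * Fract N (b^2)" .
  have "\<not> p dvd N"
  proof
    assume pN: "p dvd N"
    have "a * of_nat (Suc j) * PD D p * b = p * (PD D a * b - a * PD D b) - N"
      unfolding N_def by (simp add: algebra_simps)
    moreover have "p dvd p * (PD D a * b - a * PD D b) - N" using pN by simp
    ultimately have "p dvd a * of_nat (Suc j) * PD D p * b" by simp
    hence "p dvd a \<or> p dvd of_nat (Suc j) \<or> p dvd PD D p \<or> p dvd b"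
      using pr by (simp add: prime_elem_dvd_mult_iff)
    moreover have "\<not> p dvd of_nat (Suc j)"
    proof
      assume "p dvd of_nat (Suc j)"
      moreover have "is_unit (of_nat (Suc j) :: 'a poly)"
      proof -
        have "(of_nat (Suc j) :: 'a poly) \<noteq> 0" by (simp only: of_nat_eq_0_iff)
        moreover have "degree (of_nat (Suc j) :: 'a poly) = 0" by (simp add: of_nat_poly)
        ultimately show ?thesis using is_unit_iff_degree by blast
      qed
      ultimately have "is_unit p" by (rule dvd_unit_imp_unit)
      thus False using pr by (simp add: prime_elem_def)
    qed
    ultimately show False using ab np by blast
  qed
  moreover have "b^2 \<noteq> 0" using ab by simp
  moreover have "\<not> p dvd b^2" using ab(3) prime_elem_dvd_power[OF pr] by blast
  ultimately show ?thesis unfolding vl_def using Dh by blast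
qed



theorem corollary2p15:
  fixes dF :: "'a::field_char_0 \<Rightarrow> 'a"
    and D :: "'a poly fract \<Rightarrow> 'a poly fract"
    and f :: "'a poly fract"
  assumes "monomial_extension dF D"
    and "stable_elem D f"
  shows "\<forall>p. irreducible p \<and> normal_poly D p \<longrightarrow> (f \<noteq> 0 \<longrightarrow> nu p f \<ge> 0)"
proof (intro allI impI)
  fix p :: "'a poly"
  assume pn: "irreducible p \<and> normal_poly D p" and f0: "f \<noteq> 0"
  have me: "monomial_extension dF D" by fact
  have pr: "prime_elem p" using pn irr_prime by blast
  have pu: "\<not> is_unit p" using pr by (simp add: prime_elem_def)
  from pn obtain q where q: "D (Fract p 1) = Fract q 1" "coprime p q" unfolding normal_poly_def by blast
  have "PD D p = q" using q(1) PD[OF me, of p] by (simp add: Fract1_inj)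
  have np: "\<not> p dvd PD D p"
  proof
    assume "p dvd PD D p"
    hence "p dvd q" using \<open>PD D p = q\<close> by simp
    hence "is_unit p" using q(2) coprime_common_divisor[of p q p] by simp
    thus False using pu by simp
  qed
  from assms(2) obtain a where a0: "a 0 = f" and aS: "\<And>i. D (a (Suc i)) = a i"
    unfolding stable_elem_def by blast
  obtain n where vn: "vl p f n" using vl_exists[OF pr f0] by blast
  have nu: "nu p f = n" using nu_eq[OF pr vn] .
  show "nu p f \<ge> 0"
  proof (rule ccontr)
    assume "\<not> nu p f \<ge> 0"
    hence n0: "n < 0" using nu by simp
    have int0: "intg p 0"
      unfolding intg_def using pu by (intro exI[of _ 0] exI[of _ 1]) (simp add: Zero_fract_def)
    have claim: "n + int i < 0 \<and> vl p (a i) (n + int i)" for i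
    proof (induct i)
      case 0 then show ?case using n0 vn a0 by simp
    next
      case (Suc i)
      hence vi: "vl p (a i) (n + int i)" and ni: "n + int i < 0" by auto
      have nint: "\<not> intg p (a i)" using vl_neg_not_intg[OF pr vi ni] .
      have nint1: "\<not> intg p (a (Suc i))"
      proof
        assume "intg p (a (Suc i))"
        hence "intg p (D (a (Suc i)))" by (rule intg_D[OF me pr])
        thus False using nint aS by simp
      qed
      hence "a (Suc i) \<noteq> 0" using int0 by auto
      then obtain n' where vn': "vl p (a (Suc i)) n'" using vl_exists[OF pr] by blast
      have n'0: "n' < 0"
      proof (rule ccontr)
        assume "\<not> n' < 0"
        hence "intg p (a (Suc i))" using vl_nonneg_intg[OF vn'] by simp
        thus False using nint1 by simp
      qed
      have "vl p (D (a (Suc i))) (n' - 1)" by (rule vl_D[OF me pr np vn' n'0])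
      hence "vl p (a i) (n' - 1)" using aS by simp
      hence "n' - 1 = n + int i" using vl_unique[OF pr _ vi] by simp
      hence "n' = n + int (Suc i)" by simp
      then show ?case using vn' n'0 by simp
    qed
    have "n + int (nat (- n)) < 0" using claim by blast
    thus False using n0 by simp
  qed
qed


end
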